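(* Let $K$ be a skew field, let $V$ be a left (topological) vector space over $K$ with basis $v^0,v^1,\ldots$, and let $V'$ be the dual right (topological) vector space with basis $p_0,p_1,\ldots$, with pairing $(\cdot,\cdot):V\times V'\to K$. Put $y_i^k=(v^k,p_i)$ and let $D$ be the infinite matrix whose entry in row $k$ and column $i$ is $y_i^k$ ($i,k\ge 0$). For a generic matrix $D$ there exist a unique infinite upper triangular matrix $A=(a_m^i)_{i,m\ge0}$ (i.e. $a_m^i=0$ for $i>m$) and a unique infinite lower triangular matrix $C=(c_k^m)_{m,k\ge0}$ (i.e. $c_k^m=0$ for $k>m$) such that the vectors $$w^m=\sum_{k=0}^m c_k^m v^k\in V,\qquad q_m=\sum_{i=0}^m p_i a_m^i\in V'$$ form biorthogonal bases of $V$ and $V'$, i.e. satisfy $(w^m,q_{m'})=0$ for $m\ne m'$ and $(w^m,p_m)=(v^m,q_m)=1$ for all $m\ge0$.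
   Context: The pairing satisfies $(\lambda v,p\mu)=\lambda(v,p)\mu$ for $\lambda,\mu\in K$, and is additive in each argument. "Generic" means that $D$ avoids the degenerate cases in which the relevant finite square submatrices of $D$ (here the leading principal submatrices $(y_i^k)_{0\le i,k\le m}$, $m\ge0$) fail to be invertible. *)

theory Defs
  imports Main
begin

definition left_vs :: "('k::division_ring \<Rightarrow> 'v::ab_group_add \<Rightarrow> 'v) \<Rightarrow> bool" where
  "left_vs sm \<longleftrightarrow>
     (\<forall>a x y. sm a (x + y) = sm a x + sm a y) \<and>
     (\<forall>a b x. sm (a + b) x = sm a x + sm b x) \<and>
     (\<forall>a b x. sm (a * b) x = sm a (sm b x)) \<and>
     (\<forall>x. sm 1 x = x)"

definition right_vs :: "('p::ab_group_add \<Rightarrow> 'k::division_ring \<Rightarrow> 'p) \<Rightarrow> bool" where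
  "right_vs sm \<longleftrightarrow>
     (\<forall>a x y. sm (x + y) a = sm x a + sm y a) \<and>
     (\<forall>a b x. sm x (a + b) = sm x a + sm x b) \<and>
     (\<forall>a b x. sm x (a * b) = sm (sm x a) b) \<and>
     (\<forall>x. sm x 1 = x)"

definition pairing :: "('k::division_ring \<Rightarrow> 'v::ab_group_add \<Rightarrow> 'v) \<Rightarrow> ('p::ab_group_add \<Rightarrow> 'k \<Rightarrow> 'p)
    \<Rightarrow> ('v \<Rightarrow> 'p \<Rightarrow> 'k) \<Rightarrow> bool" where
  "pairing smv smp pr \<longleftrightarrow>
     (\<forall>x y q. pr (x + y) q = pr x q + pr y q) \<and>
     (\<forall>x q r. pr x (q + r) = pr x q + pr x r) \<and>
     (\<forall>l x q m. pr (smv l x) (smp q m) = l * pr x q * m)"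

definition left_indep :: "('k::division_ring \<Rightarrow> 'v::ab_group_add \<Rightarrow> 'v) \<Rightarrow> (nat \<Rightarrow> 'v) \<Rightarrow> bool" where
  "left_indep smv v \<longleftrightarrow>
     (\<forall>n c. (\<Sum>k<n. smv (c k) (v k)) = 0 \<longrightarrow> (\<forall>k<n. c k = 0))"

definition right_indep :: "('p::ab_group_add \<Rightarrow> 'k::division_ring \<Rightarrow> 'p) \<Rightarrow> (nat \<Rightarrow> 'p) \<Rightarrow> bool" where
  "right_indep smp p \<longleftrightarrow>
     (\<forall>n c. (\<Sum>i<n. smp (p i) (c i)) = 0 \<longrightarrow> (\<forall>i<n. c i = 0))"

definition principal_invertible :: "(nat \<Rightarrow> nat \<Rightarrow> 'k::division_ring) \<Rightarrow> nat \<Rightarrow> bool" where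
  "principal_invertible D m \<longleftrightarrow>
     (\<exists>B::nat \<Rightarrow> nat \<Rightarrow> 'k. \<forall>i\<le>m. \<forall>k\<le>m.
        (\<Sum>j\<le>m. D i j * B j k) = (if i = k then 1 else 0) \<and>
        (\<Sum>j\<le>m. B i j * D j k) = (if i = k then 1 else 0))"

definition generic :: "(nat \<Rightarrow> nat \<Rightarrow> 'k::division_ring) \<Rightarrow> bool" where
  "generic D \<longleftrightarrow> (\<forall>m. principal_invertible D m)"

end

theory Submission
  imports Defs
begin

lemma row_zero:
  fixes D B :: "nat \<Rightarrow> nat \<Rightarrow> 'k::division_ring"
  assumes inv: "\<forall>i\<le>m. \<forall>k\<le>m. (\<Sum>j\<le>m. D i j * B j k) = (if i = k then 1 else 0) \<and>
        (\<Sum>j\<le>m. B i j * D j k) = (if i = k then 1 else 0)"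
    and z: "\<forall>i\<le>m. (\<Sum>k\<le>m. c k * D k i) = 0"
    and j: "j \<le> m"
  shows "c j = 0"
proof -
  have "c j = (\<Sum>k\<le>m. c k * (if k = j then 1 else 0))"
    using j by (simp add: if_distrib cong: if_cong)
  also have "\<dots> = (\<Sum>k\<le>m. c k * (\<Sum>i\<le>m. D k i * B i j))"
    using inv j by (intro sum.cong) auto
  also have "\<dots> = (\<Sum>k\<le>m. \<Sum>i\<le>m. c k * D k i * B i j)"
    by (simp add: sum_distrib_left mult.assoc)
  also have "\<dots> = (\<Sum>i\<le>m. \<Sum>k\<le>m. c k * D k i * B i j)"
    by (rule sum.swap)
  also have "\<dots> = (\<Sum>i\<le>m. (\<Sum>k\<le>m. c k * D k i) * B i j)"
    by (simp add: sum_distrib_right)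
  also have "\<dots> = 0" using z by simp
  finally show ?thesis .
qed

lemma col_zero:
  fixes D B :: "nat \<Rightarrow> nat \<Rightarrow> 'k::division_ring"
  assumes inv: "\<forall>i\<le>m. \<forall>k\<le>m. (\<Sum>j\<le>m. D i j * B j k) = (if i = k then 1 else 0) \<and>
        (\<Sum>j\<le>m. B i j * D j k) = (if i = k then 1 else 0)"
    and z: "\<forall>k\<le>m. (\<Sum>i\<le>m. D k i * a i) = 0"
    and j: "j \<le> m"
  shows "a j = 0"
proof -
  have "a j = (\<Sum>i\<le>m. if j = i then a i else 0)"
    using j by simp
  also have "\<dots> = (\<Sum>i\<le>m. (if j = i then 1 else 0) * a i)"
    by (intro sum.cong) auto
  also have "\<dots> = (\<Sum>i\<le>m. (\<Sum>k\<le>m. B j k * D k i) * a i)"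
    using inv j by (intro sum.cong) auto
  also have "\<dots> = (\<Sum>i\<le>m. \<Sum>k\<le>m. B j k * (D k i * a i))"
    by (simp add: sum_distrib_right mult.assoc)
  also have "\<dots> = (\<Sum>k\<le>m. \<Sum>i\<le>m. B j k * (D k i * a i))"
    by (rule sum.swap)
  also have "\<dots> = (\<Sum>k\<le>m. B j k * (\<Sum>i\<le>m. D k i * a i))"
    by (simp add: sum_distrib_left)
  also have "\<dots> = 0" using z by simp
  finally show ?thesis .
qed

lemma pr_sum_left:
  assumes "right_vs smp" "pairing smv smp pr" "finite S"
  shows "pr (\<Sum>k\<in>S. smv (c k) (x k)) q = (\<Sum>k\<in>S. c k * pr (x k) q)"
  using assms(3)
proof (induction S rule: finite_induct)
  case empty
  have "pr (0 + 0) q = pr 0 q + pr 0 q" using assms(2) unfolding pairing_def by blast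
  then show ?case by simp
next
  case (insert a F)
  have sm: "pr (smv l y) q = l * pr y q" for l y
  proof -
    have "pr (smv l y) (smp q 1) = l * pr y q * 1" using assms(2) unfolding pairing_def by blast
    moreover have "smp q 1 = q" using assms(1) unfolding right_vs_def by blast
    ultimately show ?thesis by simp
  qed
  have "pr (smv (c a) (x a) + (\<Sum>k\<in>F. smv (c k) (x k))) q
        = pr (smv (c a) (x a)) q + pr (\<Sum>k\<in>F. smv (c k) (x k)) q"
    using assms(2) unfolding pairing_def by blast
  then show ?case using insert sm by simp
qed

lemma pr_sum_right:
  assumes "left_vs smv" "pairing smv smp pr" "finite S"
  shows "pr x (\<Sum>k\<in>S. smp (y k) (c k)) = (\<Sum>k\<in>S. pr x (y k) * c k)"
  using assms(3)
proof (induction S rule: finite_induct)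
  case empty
  have "pr x (0 + 0) = pr x 0 + pr x 0" using assms(2) unfolding pairing_def by blast
  then show ?case by simp
next
  case (insert a F)
  have sm: "pr x (smp z l) = pr x z * l" for l z
  proof -
    have "pr (smv 1 x) (smp z l) = 1 * pr x z * l" using assms(2) unfolding pairing_def by blast
    moreover have "smv 1 x = x" using assms(1) unfolding left_vs_def by blast
    ultimately show ?thesis by simp
  qed
  have "pr x (smp (y a) (c a) + (\<Sum>k\<in>F. smp (y k) (c k)))
        = pr x (smp (y a) (c a)) + pr x (\<Sum>k\<in>F. smp (y k) (c k))"
    using assms(2) unfolding pairing_def by blast
  then show ?case using insert sm by simp
qed

theorem theorem1:
  fixes smv :: "'k::division_ring \<Rightarrow> 'v::ab_group_add \<Rightarrow> 'v"
    and smp :: "'p::ab_group_add \<Rightarrow> 'k \<Rightarrow> 'p"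
    and pr :: "'v \<Rightarrow> 'p \<Rightarrow> 'k"
    and v :: "nat \<Rightarrow> 'v" and p :: "nat \<Rightarrow> 'p"
  assumes "left_vs smv" and "right_vs smp" and "pairing smv smp pr"
    and "left_indep smv v" and "right_indep smp p"
    and "generic (\<lambda>k i. pr (v k) (p i))"
  shows "\<exists>!(A, C). (\<forall>i m. m < i \<longrightarrow> A i m = 0) \<and> (\<forall>m k. m < k \<longrightarrow> C m k = 0) \<and>
     (let w = (\<lambda>m. \<Sum>k\<le>m. smv (C m k) (v k));
          q = (\<lambda>m. \<Sum>i\<le>m. smp (p i) (A i m))
      in (\<forall>m m'. m \<noteq> m' \<longrightarrow> pr (w m) (q m') = 0) \<and>
         (\<forall>m. pr (w m) (p m) = 1 \<and> pr (v m) (q m) = 1))"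
proof -
  define D where "D = (\<lambda>k i. pr (v k) (p i))"
  have "\<forall>m. \<exists>B. \<forall>i\<le>m. \<forall>k\<le>m. (\<Sum>j\<le>m. D i j * B j k) = (if i = k then 1 else 0) \<and>
        (\<Sum>j\<le>m. B i j * D j k) = (if i = k then 1 else 0)"
    using assms(6) unfolding generic_def principal_invertible_def D_def by blast
  then obtain B where B: "\<And>m. \<forall>i\<le>m. \<forall>k\<le>m. (\<Sum>j\<le>m. D i j * B m j k) = (if i = k then 1 else 0) \<and>
        (\<Sum>j\<le>m. B m i j * D j k) = (if i = k then 1 else 0)"
    by metis
  define C0 where "C0 = (\<lambda>m k. if k \<le> m then B m m k else 0)"
  define A0 where "A0 = (\<lambda>i m. if i \<le> m then B m i m else 0)"
  have C0row: "(\<Sum>k\<le>m. C0 m k * D k i) = (if m = i then 1 else 0)" if "i \<le> m" for m i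
    using B[of m] that by (simp add: C0_def)
  have A0col: "(\<Sum>i\<le>m. D k i * A0 i m) = (if k = m then 1 else 0)" if "k \<le> m" for m k
    using B[of m] that by (simp add: A0_def)
  have A0diag: "A0 m m \<noteq> 0" for m
  proof
    assume z: "A0 m m = 0"
    have allz: "A0 i m = 0" if im: "i \<le> m" for i
    proof (cases "i = m")
      case True then show ?thesis using z by simp
    next
      case False
      then obtain n where n: "m = Suc n" "i \<le> n" using im False by (cases m) auto
      have "(\<Sum>i\<le>n. D k i * A0 i m) = 0" if "k \<le> n" for k
        using A0col[of k m] that z n by simp
      then show ?thesis using col_zero[OF B[of n], of "\<lambda>i. A0 i m" i] n by blast
    qed
    have "(\<Sum>i\<le>m. D m i * A0 i m) = 0" using allz by simp
    then show False using A0col[of m m] by simp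
  qed
  have C0diag: "C0 m m \<noteq> 0" for m
  proof
    assume z: "C0 m m = 0"
    have allz: "C0 m k = 0" if km: "k \<le> m" for k
    proof (cases "k = m")
      case True then show ?thesis using z by simp
    next
      case False
      then obtain n where n: "m = Suc n" "k \<le> n" using km False by (cases m) auto
      have "(\<Sum>k\<le>n. C0 m k * D k i) = 0" if "i \<le> n" for i
        using C0row[of i m] that z n by simp
      then show ?thesis using row_zero[OF B[of n], of "\<lambda>k. C0 m k" k] n by blast
    qed
    have "(\<Sum>k\<le>m. C0 m k * D k m) = 0" using allz by simp
    then show False using C0row[of m m] by simp
  qed
  define W where "W = (\<lambda>C m. \<Sum>k\<le>m. smv (C m k) (v k))"
  define Q where "Q = (\<lambda>A m. \<Sum>i\<le>m. smp (p i) (A i m))"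
  have pW: "pr (W C m) (p i) = (\<Sum>k\<le>m. C m k * D k i)" for C m i
    unfolding W_def D_def using pr_sum_left[OF assms(2,3) finite_atMost, where c="C m" and x=v] by simp
  have vQ: "pr (v k) (Q A m) = (\<Sum>i\<le>m. D k i * A i m)" for A m k
    unfolding Q_def D_def using pr_sum_right[OF assms(1,3) finite_atMost, where c="\<lambda>i. A i m" and y=p] by simp
  have WQ1: "pr (W C m) (Q A m') = (\<Sum>i\<le>m'. pr (W C m) (p i) * A i m')" for C A m m'
    unfolding Q_def using pr_sum_right[OF assms(1,3) finite_atMost, where c="\<lambda>i. A i m'" and y=p] by simp
  have WQ2: "pr (W C m) (Q A m') = (\<Sum>k\<le>m. C m k * pr (v k) (Q A m'))" for C A m m'
    unfolding W_def using pr_sum_left[OF assms(2,3) finite_atMost, where c="C m" and x=v] by simp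
  define sol where "sol = (\<lambda>A C. (\<forall>i m. m < i \<longrightarrow> A i m = (0::'k)) \<and> (\<forall>m k. m < k \<longrightarrow> C m k = (0::'k)) \<and>
     (\<forall>m m'. m \<noteq> m' \<longrightarrow> pr (W C m) (Q A m') = 0) \<and>
         (\<forall>m. pr (W C m) (p m) = 1 \<and> pr (v m) (Q A m) = 1))"
  have goal_eq: "(\<exists>!(A, C). (\<forall>i m. m < i \<longrightarrow> A i m = 0) \<and> (\<forall>m k. m < k \<longrightarrow> C m k = 0) \<and>
     (let w = (\<lambda>m. \<Sum>k\<le>m. smv (C m k) (v k));
          q = (\<lambda>m. \<Sum>i\<le>m. smp (p i) (A i m))
      in (\<forall>m m'. m \<noteq> m' \<longrightarrow> pr (w m) (q m') = 0) \<and>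
         (\<forall>m. pr (w m) (p m) = 1 \<and> pr (v m) (q m) = 1))) = (\<exists>!(A, C). sol A C)"
    unfolding sol_def W_def Q_def Let_def by simp
  have ex: "sol A0 C0"
    unfolding sol_def
  proof (intro conjI allI impI)
    fix i m :: nat assume "m < i" then show "A0 i m = 0" by (simp add: A0_def)
  next
    fix m k :: nat assume "m < k" then show "C0 m k = 0" by (simp add: C0_def)
  next
    fix m show "pr (W C0 m) (p m) = 1" using pW C0row[of m m] by simp
  next
    fix m show "pr (v m) (Q A0 m) = 1" using vQ A0col[of m m] by simp
  next
    fix m m' :: nat assume "m \<noteq> m'"
    then consider "m' < m" | "m < m'" by linarith
    then show "pr (W C0 m) (Q A0 m') = 0"
    proof cases
      case 1
      have "pr (W C0 m) (p i) = 0" if "i \<le> m'" for i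
        using pW C0row[of i m] that 1 by simp
      then show ?thesis using WQ1 by simp
    next
      case 2
      have "pr (v k) (Q A0 m') = 0" if "k \<le> m" for k
        using vQ A0col[of k m'] that 2 by simp
      then show ?thesis using WQ2 by simp
    qed
  qed
  have uniq: "A = A0 \<and> C = C0" if s: "sol A C" for A C
  proof -
    have tri: "\<And>i m. m < i \<Longrightarrow> A i m = 0" "\<And>m k. m < k \<Longrightarrow> C m k = 0"
      and orth: "\<And>m m'. m \<noteq> m' \<Longrightarrow> pr (W C m) (Q A m') = 0"
      and n1: "\<And>m. pr (W C m) (p m) = 1" and n2: "\<And>m. pr (v m) (Q A m) = 1"
      using s unfolding sol_def by auto
    have main: "(\<forall>k. C m k = C0 m k) \<and> (\<forall>i. A i m = A0 i m)" for m
    proof (induction m rule: less_induct)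
      case (less m)
      note outer = less.IH
      have pz: "pr (W C m) (p i) = 0" if "i < m" for i
        using that
      proof (induction i rule: less_induct)
        case (less i)
        have "0 = pr (W C m) (Q A i)" using orth[of m i] less.prems by simp
        also have "\<dots> = (\<Sum>j\<le>i. pr (W C m) (p j) * A j i)" by (rule WQ1)
        also have "\<dots> = (\<Sum>j<i. pr (W C m) (p j) * A j i) + pr (W C m) (p i) * A i i"
          by (simp add: lessThan_Suc_atMost[symmetric])
        also have "\<dots> = pr (W C m) (p i) * A0 i i"
          using less.IH less.prems outer[of i] by simp
        finally show ?case using A0diag[of i] by simp
      qed
      have pz2: "pr (v k) (Q A m) = 0" if "k < m" for k
        using that
      proof (induction k rule: less_induct)
        case (less k)
        have "0 = pr (W C k) (Q A m)" using orth[of k m] less.prems by simp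
        also have "\<dots> = (\<Sum>j\<le>k. C k j * pr (v j) (Q A m))" by (rule WQ2)
        also have "\<dots> = (\<Sum>j<k. C k j * pr (v j) (Q A m)) + C k k * pr (v k) (Q A m)"
          by (simp add: lessThan_Suc_atMost[symmetric])
        also have "\<dots> = C0 k k * pr (v k) (Q A m)"
          using less.IH less.prems outer[of k] by simp
        finally show ?case using C0diag[of k] by simp
      qed
      have rowC: "(\<Sum>k\<le>m. (C m k - C0 m k) * D k i) = 0" if "i \<le> m" for i
      proof -
        have "(\<Sum>k\<le>m. (C m k - C0 m k) * D k i) = pr (W C m) (p i) - (\<Sum>k\<le>m. C0 m k * D k i)"
          by (simp add: left_diff_distrib sum_subtractf pW)
        also have "\<dots> = 0"
        proof (cases "i = m")
          case True then show ?thesis using n1[of m] C0row[of m m] by simp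
        next
          case False then show ?thesis using pz[of i] that C0row[of i m] by simp
        qed
        finally show ?thesis .
      qed
      have colA: "(\<Sum>i\<le>m. D k i * (A i m - A0 i m)) = 0" if "k \<le> m" for k
      proof -
        have "(\<Sum>i\<le>m. D k i * (A i m - A0 i m)) = pr (v k) (Q A m) - (\<Sum>i\<le>m. D k i * A0 i m)"
          by (simp add: right_diff_distrib sum_subtractf vQ)
        also have "\<dots> = 0"
        proof (cases "k = m")
          case True then show ?thesis using n2[of m] A0col[of m m] by simp
        next
          case False then show ?thesis using pz2[of k] that A0col[of k m] by simp
        qed
        finally show ?thesis .
      qed
      have "C m k = C0 m k" for k
      proof (cases "k \<le> m")
        case True
        show ?thesis using row_zero[OF B[of m], of "\<lambda>k. C m k - C0 m k" k] rowC True by simp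
      next
        case False then show ?thesis using tri(2)[of m k] by (simp add: C0_def)
      qed
      moreover have "A i m = A0 i m" for i
      proof (cases "i \<le> m")
        case True
        show ?thesis using col_zero[OF B[of m], of "\<lambda>i. A i m - A0 i m" i] colA True by simp
      next
        case False then show ?thesis using tri(1)[of m i] by (simp add: A0_def)
      qed
      ultimately show ?case by blast
    qed
    show ?thesis using main by (auto intro!: ext)
  qed
  show ?thesis unfolding goal_eq
  proof (rule ex1I[of _ "(A0, C0)"])
    show "case (A0, C0) of (A, C) \<Rightarrow> sol A C" using ex by simp
  next
    fix x assume "case x of (A, C) \<Rightarrow> sol A C"
    then show "x = (A0, C0)" using uniq by (cases x) auto
  qed
qed

end
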